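(* Fix $\delta>0$ and privacy levels $\epsilon_1,\dots,\epsilon_n>0$. Let $\mathcal{P}=\{(s,c,q): s\in(0,2),\ c>0,\ q\in(|s-1|,1)\}$ and $$J(\{s_i,c_i,q_i\}_{i=1}^n)=\frac{2}{n^2}\sum_{i=1}^n\frac{s_i^2c_i^2}{1-q_i^2}.$$ Then the infimum of $J$ over all $\{(s_i,c_i,q_i)\}_{i=1}^n\in\mathcal{P}^n$ satisfying the privacy constraints $\epsilon_i=\delta\frac{q_i}{c_i(q_i-|s_i-1|)}$ for all $i$ (equivalently $c_i=\delta\frac{q_i}{\epsilon_i(q_i-|s_i-1|)}$) equals $$J^*=\frac{2\delta^2}{n^2}\sum_{i=1}^n\frac{1}{\epsilon_i^2}.$$ This infimum is not attained on the constraint set, and it is approached by taking $s_i=1$, $c_i=\delta q_i/(\epsilon_i(q_i-|s_i-1|))$, and $q_i\to0$ for all $i$.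
   Context: $J$ equals the variance of the consensus point $\theta_\infty$ of the Laplacian differentially private consensus algorithm $\theta(k+1)=\theta(k)-hLx(k)+S\eta(k)$, $x(k)=\theta(k)+\eta(k)$, $S=\mathrm{diag}(s_i)$, $\eta_i(k)\sim\mathrm{Lap}(c_iq_i^k)$ independent, and $\epsilon_i=\delta q_i/(c_i(q_i-|s_i-1|))$ is the differential privacy level of agent $i$ for adjacency bound $\delta$. *)

theory Defs
  imports Complex_Main
begin

text \<open>Agents are indexed by i < n; parameter families are functions nat \<Rightarrow> real,
  only their values at i < n matter.\<close>

definition J :: "nat \<Rightarrow> (nat \<Rightarrow> real) \<Rightarrow> (nat \<Rightarrow> real) \<Rightarrow> (nat \<Rightarrow> real) \<Rightarrow> real" where
  "J n s c q = 2 / (real n)^2 * (\<Sum>i<n. (s i)^2 * (c i)^2 / (1 - (q i)^2))"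

definition feasible :: "nat \<Rightarrow> real \<Rightarrow> (nat \<Rightarrow> real) \<Rightarrow> (nat \<Rightarrow> real) \<Rightarrow> (nat \<Rightarrow> real) \<Rightarrow> (nat \<Rightarrow> real) \<Rightarrow> bool" where
  "feasible n \<delta> \<epsilon> s c q \<longleftrightarrow>
     (\<forall>i<n. 0 < s i \<and> s i < 2 \<and> 0 < c i \<and> \<bar>s i - 1\<bar> < q i \<and> q i < 1 \<and>
            \<epsilon> i = \<delta> * q i / (c i * (q i - \<bar>s i - 1\<bar>)))"

definition Jstar :: "nat \<Rightarrow> real \<Rightarrow> (nat \<Rightarrow> real) \<Rightarrow> real" where
  "Jstar n \<delta> \<epsilon> = 2 * \<delta>^2 / (real n)^2 * (\<Sum>i<n. 1 / (\<epsilon> i)^2)"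

end

theory Submission
  imports Defs
begin

lemma term_gt:
  fixes s c q e \<delta> :: real
  assumes s0: "0 < s" and s2: "s < 2" and c0: "0 < c" and aq: "\<bar>s - 1\<bar> < q" and q1: "q < 1"
    and ee: "e = \<delta> * q / (c * (q - \<bar>s - 1\<bar>))" and d0: "\<delta> > 0"
  shows "\<delta>^2 / e^2 < s^2 * c^2 / (1 - q^2)"
proof -
  define a where "a = \<bar>s - 1\<bar>"
  have a0: "a \<ge> 0" and qa: "a < q" and sa: "s \<ge> 1 - a" using aq by (auto simp: a_def)
  have q0: "q > 0" using a0 qa by linarith
  have "s * q \<ge> (1 - a) * q" using sa q0 by (simp add: mult_right_mono)
  moreover have "(1 - a) * q \<ge> q - a" using a0 q1 by (simp add: algebra_simps mult_left_le)
  ultimately have sq: "s * q \<ge> q - a" by linarith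
  have pos: "q - a > 0" using qa by simp
  have "(q - a)^2 \<le> (s*q)^2" using sq pos by (simp add: power_mono)
  moreover have "(q - a)^2 * (1 - q^2) < (q-a)^2"
    using pos q0 by (simp add: algebra_simps)
  ultimately have key: "(q - a)^2 * (1 - q^2) < s^2 * q^2" by (simp add: power_mult_distrib)
  have ee': "e = \<delta> * q / (c * (q - a))" using ee a_def by simp
  have e0: "e > 0" using ee' d0 q0 c0 pos by simp
  have de0: "\<delta> / e = c * (q-a) / q" using ee' q0 c0 pos d0 e0 by (simp add: field_simps)
  have de: "\<delta>^2 / e^2 = c^2 * (q-a)^2 / q^2"
    by (metis de0 power_divide power_mult_distrib)
  have q2: "1 - q^2 > 0" using q0 q1 by (simp add: power_less_one_iff abs_square_less_1)
  have "c^2 * (q-a)^2 / q^2 < s^2 * c^2 / (1 - q^2)"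
  proof -
    have "c^2 * ((q - a)^2 * (1 - q^2)) < c^2 * (s^2 * q^2)" using key c0 by simp
    thus ?thesis using q2 q0 by (simp add: field_simps)
  qed
  thus ?thesis using de by simp
qed

theorem mainTheorem7:
  fixes n :: nat and \<delta> :: real and \<epsilon> :: "nat \<Rightarrow> real"
  assumes "n \<ge> 1" and "\<delta> > 0" and "\<forall>i<n. \<epsilon> i > 0"
  shows "Inf ((\<lambda>(s, c, q). J n s c q) ` {(s, c, q). feasible n \<delta> \<epsilon> s c q}) = Jstar n \<delta> \<epsilon>
       \<and> (\<forall>s c q. feasible n \<delta> \<epsilon> s c q \<longrightarrow> J n s c q \<noteq> Jstar n \<delta> \<epsilon>)
       \<and> (\<forall>Q :: nat \<Rightarrow> nat \<Rightarrow> real.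
            (\<forall>k. \<forall>i<n. 0 < Q k i \<and> Q k i < 1) \<and> (\<forall>i<n. (\<lambda>k. Q k i) \<longlonglongrightarrow> 0) \<longrightarrow>
            (\<forall>k. feasible n \<delta> \<epsilon> (\<lambda>i. 1) (\<lambda>i. \<delta> * Q k i / (\<epsilon> i * (Q k i - \<bar>1 - 1\<bar>))) (Q k)) \<and>
            (\<lambda>k. J n (\<lambda>i. 1) (\<lambda>i. \<delta> * Q k i / (\<epsilon> i * (Q k i - \<bar>1 - 1\<bar>))) (Q k))
               \<longlonglongrightarrow> Jstar n \<delta> \<epsilon>)"
proof -
  have n0: "real n > 0" using assms(1) by simp
  have strict: "Jstar n \<delta> \<epsilon> < J n s c q" if f: "feasible n \<delta> \<epsilon> s c q" for s c q
  proof -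
    have "(\<Sum>i<n. \<delta>^2 / (\<epsilon> i)^2) < (\<Sum>i<n. (s i)^2 * (c i)^2 / (1 - (q i)^2))"
    proof (rule sum_strict_mono)
      show "finite {..<n}" by simp
      show "{..<n} \<noteq> {}" using assms(1) by (simp add: lessThan_empty_iff)
      fix i assume "i \<in> {..<n}"
      then show "\<delta>^2 / (\<epsilon> i)^2 < (s i)^2 * (c i)^2 / (1 - (q i)^2)"
        using f assms(2) unfolding feasible_def by (intro term_gt) auto
    qed
    moreover have "Jstar n \<delta> \<epsilon> = 2 / (real n)^2 * (\<Sum>i<n. \<delta>^2 / (\<epsilon> i)^2)"
      unfolding Jstar_def by (simp add: sum_distrib_left)
    ultimately show ?thesis unfolding J_def using n0
      by (simp add: divide_strict_right_mono)
  qed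
  have part3: "(\<forall>k. feasible n \<delta> \<epsilon> (\<lambda>i. 1) (\<lambda>i. \<delta> * Q k i / (\<epsilon> i * (Q k i - \<bar>1 - 1\<bar>))) (Q k)) \<and>
            (\<lambda>k. J n (\<lambda>i. 1) (\<lambda>i. \<delta> * Q k i / (\<epsilon> i * (Q k i - \<bar>1 - 1\<bar>))) (Q k))
               \<longlonglongrightarrow> Jstar n \<delta> \<epsilon>"
    if Q1: "\<forall>k. \<forall>i<n. 0 < Q k i \<and> Q k i < 1" and Q2: "\<forall>i<n. (\<lambda>k. Q k i) \<longlonglongrightarrow> 0"
    for Q :: "nat \<Rightarrow> nat \<Rightarrow> real"
  proof
    show "\<forall>k. feasible n \<delta> \<epsilon> (\<lambda>i. 1) (\<lambda>i. \<delta> * Q k i / (\<epsilon> i * (Q k i - \<bar>1 - 1\<bar>))) (Q k)"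
      using Q1 assms(2,3) unfolding feasible_def by (auto simp: field_simps) (metis less_irrefl)
    have eq: "J n (\<lambda>i. 1) (\<lambda>i. \<delta> * Q k i / (\<epsilon> i * (Q k i - \<bar>1 - 1\<bar>))) (Q k)
       = 2 / (real n)^2 * (\<Sum>i<n. (\<delta> / \<epsilon> i)^2 / (1 - (Q k i)^2))" for k
      unfolding J_def using Q1 by (intro arg_cong[where f="\<lambda>x. 2 / (real n)^2 * x"] sum.cong) (auto, metis less_irrefl)
    have "(\<lambda>k. 2 / (real n)^2 * (\<Sum>i<n. (\<delta> / \<epsilon> i)^2 / (1 - (Q k i)^2)))
        \<longlonglongrightarrow> 2 / (real n)^2 * (\<Sum>i<n. (\<delta> / \<epsilon> i)^2 / (1 - 0^2))"
      using Q2 by (intro tendsto_intros tendsto_sum) auto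
    moreover have "2 / (real n)^2 * (\<Sum>i<n. (\<delta> / \<epsilon> i)^2 / (1 - 0^2)) = Jstar n \<delta> \<epsilon>"
      unfolding Jstar_def by (simp add: sum_distrib_left power_divide)
    ultimately show "(\<lambda>k. J n (\<lambda>i. 1) (\<lambda>i. \<delta> * Q k i / (\<epsilon> i * (Q k i - \<bar>1 - 1\<bar>))) (Q k))
               \<longlonglongrightarrow> Jstar n \<delta> \<epsilon>" unfolding eq by simp
  qed
  define Q0 :: "nat \<Rightarrow> nat \<Rightarrow> real" where "Q0 = (\<lambda>k i. 1 / (real k + 2))"
  have Q01: "\<forall>k. \<forall>i<n. 0 < Q0 k i \<and> Q0 k i < 1" unfolding Q0_def by auto
  have "(\<lambda>k. 1 / (real k + 2)) \<longlonglongrightarrow> 0"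
  proof -
    have "(\<lambda>k. 1 / (real (k + 2))) \<longlonglongrightarrow> 0"
      using LIMSEQ_ignore_initial_segment[OF lim_const_over_n[of 1], of 2] by simp
    thus ?thesis by (simp add: add.commute)
  qed
  hence Q02: "\<forall>i<n. (\<lambda>k. Q0 k i) \<longlonglongrightarrow> 0" unfolding Q0_def by simp
  note P = part3[OF Q01 Q02]
  let ?S = "(\<lambda>(s, c, q). J n s c q) ` {(s, c, q). feasible n \<delta> \<epsilon> s c q}"
  let ?x = "\<lambda>k. J n (\<lambda>i. 1) (\<lambda>i. \<delta> * Q0 k i / (\<epsilon> i * (Q0 k i - \<bar>1 - 1\<bar>))) (Q0 k)"
  have mem: "?x k \<in> ?S" for k
    using P by (intro image_eqI[where x="((\<lambda>i. 1), (\<lambda>i. \<delta> * Q0 k i / (\<epsilon> i * (Q0 k i - \<bar>1 - 1\<bar>))), Q0 k)"]) auto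
  have lb: "\<And>y. y \<in> ?S \<Longrightarrow> Jstar n \<delta> \<epsilon> \<le> y" using strict by (auto intro: less_imp_le)
  have bdd: "bdd_below ?S" using lb by (rule bdd_belowI)
  have ne: "?S \<noteq> {}" using mem[of 0] by blast
  have ge: "Jstar n \<delta> \<epsilon> \<le> Inf ?S" using ne lb by (rule cInf_greatest)
  have "Inf ?S \<le> ?x k" for k using mem bdd by (intro cInf_lower)
  hence le: "Inf ?S \<le> Jstar n \<delta> \<epsilon>" using P by (intro LIMSEQ_le_const[of ?x]) auto
  show ?thesis using ge le strict part3 by (auto intro: antisym dest: less_imp_neq[THEN not_sym])
qed

end
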